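(* Let $\lambda=2\cos(\pi/5)$ and let $H_5$ be the subgroup of $SL(2,\mathbb R)$ generated by $S=\begin{pmatrix}0&1\\-1&0\end{pmatrix}$ and $T=\begin{pmatrix}1&\lambda\\0&1\end{pmatrix}$. Let $\tau,\pi\in\mathbb Z[\lambda]$ be nonzero and let $a$ and $b$ be the smallest positive rational integers in the ideals $(\tau)$ and $(\pi)$ respectively. Suppose $\gcd(a,b)=1$. Then $H_5=H(\tau)H(\pi)$ and $[H_5:H(\tau\pi)]=[H_5:H(\tau)]\,[H_5:H(\pi)]$.
   Context: For $\alpha\in\mathbb Z[\lambda]$, $H(\alpha)=\{(a_{ij})\in H_5 : a_{11}-1,\ a_{22}-1,\ a_{12},\ a_{21}\in \alpha\mathbb Z[\lambda]\}$ is the principal congruence subgroup of level $\alpha$. *)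

theory Defs
  imports "HOL-Analysis.Analysis" "HOL-Algebra.Coset" "HOL-Algebra.Generated_Groups"
begin

definition mat2 :: "real \<Rightarrow> real \<Rightarrow> real \<Rightarrow> real \<Rightarrow> real^2^2" where
  "mat2 a b c d = (\<chi> i j. if i = 1 then (if j = 1 then a else b) else (if j = 1 then c else d))"

definition lam :: real where "lam = 2 * cos (pi / 5)"

definition Sm :: "real^2^2" where "Sm = mat2 0 1 (-1) 0"
definition Tm :: "real^2^2" where "Tm = mat2 1 lam 0 1"

definition SL2 :: "(real^2^2) monoid" where
  "SL2 = \<lparr>carrier = {A. det A = 1}, mult = (\<lambda>A B. A ** B), one = mat 1\<rparr>"

definition H5 :: "(real^2^2) set" where "H5 = generate SL2 {Sm, Tm}"

definition H5grp :: "(real^2^2) monoid" where "H5grp = SL2\<lparr>carrier := H5\<rparr>"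

definition Zlam :: "real set" where
  "Zlam = {of_int m + of_int n * lam | m n. True}"

definition ideal_gen :: "real \<Rightarrow> real set" where
  "ideal_gen \<alpha> = {\<alpha> * x | x. x \<in> Zlam}"

definition min_pos_int :: "real \<Rightarrow> nat" where
  "min_pos_int \<alpha> = (LEAST n::nat. 0 < n \<and> real n \<in> ideal_gen \<alpha>)"

definition Hcong :: "real \<Rightarrow> (real^2^2) set" where
  "Hcong \<alpha> = {A \<in> H5. A$1$1 - 1 \<in> ideal_gen \<alpha> \<and> A$2$2 - 1 \<in> ideal_gen \<alpha>
                     \<and> A$1$2 \<in> ideal_gen \<alpha> \<and> A$2$1 \<in> ideal_gen \<alpha>}"

definition idx5 :: "(real^2^2) set \<Rightarrow> nat" where
  "idx5 K = card (rcosets\<^bsub>H5grp\<^esub> K)"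

end

theory Submission
  imports Defs
begin


lemma cos3: "cos (3*(x::real)) = 4 * cos x ^ 3 - 3 * cos x"
proof -
  have "cos (3*x) = cos (2*x + x)" by (simp add: algebra_simps)
  also have "\<dots> = cos (2*x) * cos x - sin (2*x) * sin x" by (rule cos_add)
  also have "\<dots> = (2 * cos x ^ 2 - 1) * cos x - 2 * sin x ^2 * cos x"
    by (simp add: cos_double_cos sin_double power2_eq_square)
  also have "\<dots> = (2 * cos x ^ 2 - 1) * cos x - 2 * (1 - cos x ^ 2) * cos x" by (simp add: sin_squared_eq)
  also have "\<dots> = 4 * cos x ^ 3 - 3 * cos x" by (simp add: algebra_simps power3_eq_cube power2_eq_square)
  finally show ?thesis .
qed

lemma lam_sq: "lam * lam = lam + 1"
proof -
  define c where "c = cos (pi/5)"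
  have cpos: "c > 0" unfolding c_def by (rule cos_gt_zero_pi) (use pi_gt_zero in linarith)+
  have "cos (3*(pi/5)) = - cos (2*(pi/5))"
  proof -
    have "3*(pi/5) = pi - 2*(pi/5)" by simp
    thus ?thesis by (simp only: cos_pi_minus)
  qed
  hence "4*c^3 - 3*c = -(2*c^2 - 1)" unfolding c_def cos3 cos_double_cos .
  hence "(c+1) * (4*c*c - 2*c - 1) = 0" by (simp add: algebra_simps power3_eq_cube power2_eq_square)
  with cpos have "4*c*c = 2*c+1" by simp
  thus ?thesis unfolding lam_def c_def[symmetric] by (simp add: algebra_simps)
qed

lemma Zlam_iff: "x \<in> Zlam \<longleftrightarrow> (\<exists>m n. x = of_int m + of_int n * lam)"
  unfolding Zlam_def by blast

lemma Zlam_int[simp]: "of_int m \<in> Zlam"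
  unfolding Zlam_iff by (rule exI[of _ m], rule exI[of _ 0]) simp
lemma Zlam_0[simp]: "0 \<in> Zlam" using Zlam_int[of 0] by simp
lemma Zlam_1[simp]: "1 \<in> Zlam" using Zlam_int[of 1] by simp
lemma Zlam_nat[simp]: "real n \<in> Zlam" using Zlam_int[of "int n"] by simp
lemma Zlam_lam[simp]: "lam \<in> Zlam"
  unfolding Zlam_iff by (rule exI[of _ 0], rule exI[of _ 1]) simp

lemma Zlam_add[simp]: assumes "x \<in> Zlam" "y \<in> Zlam" shows "x + y \<in> Zlam"
proof -
  obtain m n where x: "x = of_int m + of_int n * lam" using assms(1) Zlam_iff by blast
  obtain p q where y: "y = of_int p + of_int q * lam" using assms(2) Zlam_iff by blast
  have "x + y = of_int (m+p) + of_int (n+q) * lam" unfolding x y by (simp add: algebra_simps)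
  thus ?thesis unfolding Zlam_iff by blast
qed
lemma Zlam_uminus[simp]: assumes "x \<in> Zlam" shows "- x \<in> Zlam"
proof -
  obtain m n where x: "x = of_int m + of_int n * lam" using assms(1) Zlam_iff by blast
  have "- x = of_int (-m) + of_int (-n) * lam" unfolding x by (simp add: algebra_simps)
  thus ?thesis unfolding Zlam_iff by blast
qed
lemma Zlam_diff[simp]: "x \<in> Zlam \<Longrightarrow> y \<in> Zlam \<Longrightarrow> x - y \<in> Zlam"
  using Zlam_add[of x "-y"] by simp
lemma Zlam_mult[simp]: "x \<in> Zlam \<Longrightarrow> y \<in> Zlam \<Longrightarrow> x * y \<in> Zlam"
  unfolding Zlam_iff
proof clarify
  fix m n p q :: int
  have "(of_int m + of_int n * lam) * (of_int p + of_int q * lam)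
     = of_int (m*p + n*q) + of_int (m*q+n*p+n*q) * lam"
  proof -
    have "(of_int m + of_int n * lam) * (of_int p + of_int q * lam)
       = of_int m * of_int p + (of_int m * of_int q + of_int n * of_int p)*lam + of_int n * of_int q * (lam*lam)"
      by (simp add: algebra_simps)
    also have "\<dots> = of_int (m*p + n*q) + of_int (m*q+n*p+n*q) * lam"
      unfolding lam_sq by (simp add: algebra_simps)
    finally show ?thesis .
  qed
  thus "\<exists>a b. (of_int m + of_int n * lam) * (of_int p + of_int q * lam) = of_int a + of_int b * lam"
    by blast
qed

lemma ideal_iff: "x \<in> ideal_gen a \<longleftrightarrow> (\<exists>y\<in>Zlam. x = a * y)"
  unfolding ideal_gen_def by blast

lemma ideal_0[simp]: "0 \<in> ideal_gen a" unfolding ideal_iff by (rule bexI[of _ 0]) auto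
lemma ideal_gen_self: "y \<in> Zlam \<Longrightarrow> a * y \<in> ideal_gen a" unfolding ideal_iff by blast
lemma ideal_add[simp]: "x \<in> ideal_gen a \<Longrightarrow> y \<in> ideal_gen a \<Longrightarrow> x + y \<in> ideal_gen a"
  unfolding ideal_iff by clarify (metis Zlam_add distrib_left)
lemma ideal_uminus[simp]: "x \<in> ideal_gen a \<Longrightarrow> - x \<in> ideal_gen a"
  unfolding ideal_iff by clarify (metis Zlam_uminus mult_minus_right)
lemma ideal_diff[simp]: "x \<in> ideal_gen a \<Longrightarrow> y \<in> ideal_gen a \<Longrightarrow> x - y \<in> ideal_gen a"
  using ideal_add[of x a "-y"] by simp
lemma ideal_multR: "x \<in> ideal_gen a \<Longrightarrow> y \<in> Zlam \<Longrightarrow> x * y \<in> ideal_gen a"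
  unfolding ideal_iff by clarify (metis Zlam_mult mult.assoc)
lemma ideal_multL: "x \<in> ideal_gen a \<Longrightarrow> y \<in> Zlam \<Longrightarrow> y * x \<in> ideal_gen a"
  using ideal_multR by (simp add: mult.commute)

lemma norm_nonzero_aux:
  fixes p q :: int
  shows "p^2 + p*q - q^2 = 0 \<Longrightarrow> p = 0"
proof (induction "nat \<bar>p\<bar>" arbitrary: p q rule: less_induct)
  case less
  show ?case
  proof (rule ccontr)
    assume p0: "p \<noteq> 0"
    have "even p \<and> even q"
    proof (rule ccontr)
      assume "\<not> (even p \<and> even q)"
      hence "odd (p^2 + p*q - q^2)" by (cases "even p"; cases "even q") (simp_all add: power2_eq_square)
      with less.prems show False by simp
    qed
    then obtain p' q' where pq: "p = 2*p'" "q = 2*q'" by (meson dvdE)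
    have "4*(p'^2 + p'*q' - q'^2) = 0" using less.prems unfolding pq by (simp add: algebra_simps power2_eq_square)
    hence "p'^2 + p'*q' - q'^2 = 0" by simp
    moreover have "nat \<bar>p'\<bar> < nat \<bar>p\<bar>" using p0 pq by auto
    ultimately have "p' = 0" using less.hyps by blast
    with pq p0 show False by simp
  qed
qed

lemma exists_pos_int:
  assumes "t \<in> Zlam" "t \<noteq> 0"
  shows "\<exists>n::nat. 0 < n \<and> real n \<in> ideal_gen t"
proof -
  obtain m n where t: "t = of_int m + of_int n * lam" using assms(1) Zlam_iff by blast
  define t' where "t' = of_int (m+n) - of_int n * lam"
  have t'Z: "t' \<in> Zlam" unfolding t'_def by simp
  have prod: "t * t' = of_int (m^2 + m*n - n^2)"
  proof -
    have "t * t' = of_int m * of_int (m+n) + (of_int n * of_int (m+n) - of_int m * of_int n) * lam - of_int n * of_int n * (lam*lam)"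
      unfolding t t'_def by (simp add: algebra_simps)
    also have "\<dots> = of_int (m^2 + m*n - n^2)"
      unfolding lam_sq by (simp add: algebra_simps power2_eq_square)
    finally show ?thesis .
  qed
  have N0: "m^2 + m*n - n^2 \<noteq> 0"
  proof
    assume "m^2 + m*n - n^2 = 0"
    hence m0: "m = 0" by (rule norm_nonzero_aux)
    with \<open>m^2 + m*n - n^2 = 0\<close> have "n = 0" by simp
    with m0 t assms(2) show False by simp
  qed
  define N where "N = m^2 + m*n - n^2"
  have "of_int N \<in> ideal_gen t" using ideal_gen_self[OF t'Z, of t] prod N_def by simp
  hence "of_int \<bar>N\<bar> \<in> ideal_gen t" by (cases "N \<ge> 0") (auto dest: ideal_uminus)
  moreover have "\<bar>N\<bar> > 0" using N0 N_def by simp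
  ultimately show ?thesis
    by (intro exI[of _ "nat \<bar>N\<bar>"]) simp
qed



lemma two_ne_one[simp]: "(2::2) \<noteq> 1" "(1::2) \<noteq> 2" by simp_all

lemma mat2_nth[simp]: "mat2 a b c d $ 1 $ 1 = a" "mat2 a b c d $ 1 $ 2 = b"
  "mat2 a b c d $ 2 $ 1 = c" "mat2 a b c d $ 2 $ 2 = d"
  unfolding mat2_def by simp_all

lemma mat2_eta: "A = mat2 (A$1$1) (A$1$2) (A$2$1) (A$2$2)"
  unfolding vec_eq_iff forall_2 by simp

lemma mat2_eq_iff: "mat2 a b c d = mat2 a' b' c' d' \<longleftrightarrow> a = a' \<and> b = b' \<and> c = c' \<and> d = d'"
  by (metis mat2_nth)

lemma mult_mat2: "mat2 a b c d ** mat2 a' b' c' d' = mat2 (a*a'+b*c') (a*b'+b*d') (c*a'+d*c') (c*b'+d*d')"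
  unfolding vec_eq_iff forall_2 by (simp add: matrix_matrix_mult_def sum_2)

lemma mat1_mat2: "(mat 1 :: real^2^2) = mat2 1 0 0 1"
  unfolding vec_eq_iff forall_2 by (simp add: mat_def)

lemma det_mat2: "det (mat2 a b c d) = a*d - b*c"
  by (simp add: det_2)

definition adj :: "real^2^2 \<Rightarrow> real^2^2" where
  "adj A = mat2 (A$2$2) (-(A$1$2)) (-(A$2$1)) (A$1$1)"

lemma adj_mat2: "adj (mat2 a b c d) = mat2 d (-b) (-c) a" by (simp add: adj_def)

lemma mat2_cases: obtains a b c d where "A = mat2 a b c d"
  using mat2_eta by blast

lemma adj_left: "det A = 1 \<Longrightarrow> adj A ** A = mat 1"
  by (cases A rule: mat2_cases) (simp add: adj_mat2 mult_mat2 mat1_mat2 det_mat2 mat2_eq_iff algebra_simps)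

lemma adj_right: "det A = 1 \<Longrightarrow> A ** adj A = mat 1"
  by (cases A rule: mat2_cases) (simp add: adj_mat2 mult_mat2 mat1_mat2 det_mat2 mat2_eq_iff algebra_simps)

lemma det_adj: "det (adj A) = det A"
  by (simp add: adj_def det_mat2 det_2 algebra_simps)

lemma SL2_simps[simp]: "carrier SL2 = {A. det A = 1}" "mult SL2 = (\<lambda>A B. A ** B)" "one SL2 = mat 1"
  by (simp_all add: SL2_def)

lemma group_SL2: "group SL2"
proof (rule groupI)
  show "\<And>x y. x \<in> carrier SL2 \<Longrightarrow> y \<in> carrier SL2 \<Longrightarrow> x \<otimes>\<^bsub>SL2\<^esub> y \<in> carrier SL2"
    by (simp add: det_mul)
  show "\<one>\<^bsub>SL2\<^esub> \<in> carrier SL2" by simp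
  show "\<And>x y z. x \<in> carrier SL2 \<Longrightarrow> y \<in> carrier SL2 \<Longrightarrow> z \<in> carrier SL2 \<Longrightarrow>
      x \<otimes>\<^bsub>SL2\<^esub> y \<otimes>\<^bsub>SL2\<^esub> z = x \<otimes>\<^bsub>SL2\<^esub> (y \<otimes>\<^bsub>SL2\<^esub> z)"
    by (simp add: matrix_mul_assoc)
  show "\<And>x. x \<in> carrier SL2 \<Longrightarrow> \<one>\<^bsub>SL2\<^esub> \<otimes>\<^bsub>SL2\<^esub> x = x" by simp
  show "\<And>x. x \<in> carrier SL2 \<Longrightarrow> \<exists>y\<in>carrier SL2. y \<otimes>\<^bsub>SL2\<^esub> x = \<one>\<^bsub>SL2\<^esub>"
    using adj_left det_adj by fastforce
qed

interpretation SL: group SL2 by (rule group_SL2)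

lemma inv_SL2: "det A = 1 \<Longrightarrow> inv\<^bsub>SL2\<^esub> A = adj A"
  by (rule SL.inv_equality) (simp_all add: adj_left det_adj)

lemma Sm_Tm_carrier: "{Sm, Tm} \<subseteq> carrier SL2"
  by (simp add: Sm_def Tm_def det_mat2)

lemma subgroup_H5: "subgroup H5 SL2"
  unfolding H5_def by (rule SL.generate_is_subgroup[OF Sm_Tm_carrier])

lemma group_H5grp: "group H5grp"
  unfolding H5grp_def by (rule SL.subgroup_imp_group[OF subgroup_H5])

interpretation HG: group H5grp by (rule group_H5grp)

lemma H5grp_simps[simp]: "carrier H5grp = H5" "mult H5grp = (\<lambda>A B. A ** B)" "one H5grp = mat 1"
  by (simp_all add: H5grp_def SL2_def)

lemma H5_det: "A \<in> H5 \<Longrightarrow> det A = 1"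
  using subgroup.subset[OF subgroup_H5] by auto

lemma inv_H5grp: "A \<in> H5 \<Longrightarrow> inv\<^bsub>H5grp\<^esub> A = adj A"
  unfolding H5grp_def using SL.m_inv_consistent[OF subgroup_H5] inv_SL2 H5_det by simp

lemma H5_mult: "A \<in> H5 \<Longrightarrow> B \<in> H5 \<Longrightarrow> A ** B \<in> H5"
  using subgroup.m_closed[OF subgroup_H5] by fastforce
lemma H5_adj: "A \<in> H5 \<Longrightarrow> adj A \<in> H5"
  using subgroup.m_inv_closed[OF subgroup_H5] inv_SL2 H5_det by fastforce
lemma H5_one: "mat 1 \<in> H5"
  using subgroup.one_closed[OF subgroup_H5] by simp
lemma H5_S: "Sm \<in> H5" and H5_T: "Tm \<in> H5"
  unfolding H5_def by (auto intro: generate.incl)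

definition zl :: "real^2^2 \<Rightarrow> bool" where
  "zl A \<longleftrightarrow> A$1$1 \<in> Zlam \<and> A$1$2 \<in> Zlam \<and> A$2$1 \<in> Zlam \<and> A$2$2 \<in> Zlam"

lemma zl_mult: "zl A \<Longrightarrow> zl B \<Longrightarrow> zl (A ** B)"
  apply (subst mat2_eta[of A], subst mat2_eta[of B])
  by (simp add: zl_def mult_mat2)

lemma zl_adj: "zl A \<Longrightarrow> zl (adj A)" by (simp add: zl_def adj_def)

lemma H5_zl: "A \<in> H5 \<Longrightarrow> zl A"
  unfolding H5_def
proof (induction A rule: generate.induct)
  case one then show ?case by (simp add: mat1_mat2 zl_def)
next
  case (incl h) then show ?case by (auto simp: Sm_def Tm_def zl_def)
next
  case (inv h)
  have "h \<in> carrier SL2" using inv.hyps Sm_Tm_carrier by blast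
  moreover have "zl h" using inv.hyps by (auto simp: Sm_def Tm_def zl_def)
  ultimately show ?case using inv_SL2 zl_adj by simp
next
  case (eng h1 h2) then show ?case by (simp add: zl_mult)
qed



definition cg :: "real \<Rightarrow> real^2^2 \<Rightarrow> real^2^2 \<Rightarrow> bool" where
  "cg t A B \<longleftrightarrow> A$1$1 - B$1$1 \<in> ideal_gen t \<and> A$1$2 - B$1$2 \<in> ideal_gen t
     \<and> A$2$1 - B$2$1 \<in> ideal_gen t \<and> A$2$2 - B$2$2 \<in> ideal_gen t"

lemma Hcong_iff: "A \<in> Hcong t \<longleftrightarrow> A \<in> H5 \<and> cg t A (mat 1)"
  unfolding Hcong_def cg_def by (auto simp add: mat1_mat2)

lemma prod_cong: "x - x' \<in> ideal_gen t \<Longrightarrow> y - y' \<in> ideal_gen t \<Longrightarrow> y \<in> Zlam \<Longrightarrow> x' \<in> Zlam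
   \<Longrightarrow> x*y - x'*y' \<in> ideal_gen t"
proof -
  assume a: "x - x' \<in> ideal_gen t" "y - y' \<in> ideal_gen t" "y \<in> Zlam" "x' \<in> Zlam"
  have "x*y - x'*y' = (x - x')*y + x'*(y - y')" by (simp add: algebra_simps)
  thus ?thesis using a ideal_multR ideal_multL ideal_add by metis
qed

lemma sum_cong: "p - p' \<in> ideal_gen t \<Longrightarrow> q - q' \<in> ideal_gen t \<Longrightarrow> (p + q) - (p' + q') \<in> ideal_gen t"
proof -
  assume a: "p - p' \<in> ideal_gen t" "q - q' \<in> ideal_gen t"
  have "(p + q) - (p' + q') = (p - p') + (q - q')" by simp
  thus ?thesis using a ideal_add by metis
qed

lemma cg_mult: "cg t A A' \<Longrightarrow> cg t B B' \<Longrightarrow> zl B \<Longrightarrow> zl A' \<Longrightarrow> cg t (A ** B) (A' ** B')"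
  apply (cases A rule: mat2_cases, cases B rule: mat2_cases, cases A' rule: mat2_cases, cases B' rule: mat2_cases)
  by (simp add: cg_def zl_def mult_mat2 sum_cong prod_cong)

lemma cg_refl: "cg t A A" by (simp add: cg_def)

lemma subgroup_Hcong: "subgroup (Hcong t) H5grp"
proof (rule HG.subgroupI)
  show "Hcong t \<subseteq> carrier H5grp" by (auto simp: Hcong_iff)
  have "mat 1 \<in> Hcong t" using H5_one by (simp add: Hcong_iff cg_refl)
  thus "Hcong t \<noteq> {}" by blast
  show "\<And>a. a \<in> Hcong t \<Longrightarrow> inv\<^bsub>H5grp\<^esub> a \<in> Hcong t"
  proof -
    fix a assume "a \<in> Hcong t"
    hence a: "a \<in> H5" "cg t a (mat 1)" by (auto simp: Hcong_iff)
    have "cg t (adj a) (mat 1)" using a(2)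
      by (cases a rule: mat2_cases) (simp add: cg_def adj_mat2 mat1_mat2 ideal_uminus)
    thus "inv\<^bsub>H5grp\<^esub> a \<in> Hcong t" using a inv_H5grp H5_adj by (simp add: Hcong_iff)
  qed
  show "\<And>a b. a \<in> Hcong t \<Longrightarrow> b \<in> Hcong t \<Longrightarrow> a \<otimes>\<^bsub>H5grp\<^esub> b \<in> Hcong t"
  proof -
    fix a b assume "a \<in> Hcong t" "b \<in> Hcong t"
    hence a: "a \<in> H5" "cg t a (mat 1)" "b \<in> H5" "cg t b (mat 1)" by (auto simp: Hcong_iff)
    have "cg t (a ** b) (mat 1 ** mat 1)"
      by (rule cg_mult) (use a H5_zl H5_one in auto)
    thus "a \<otimes>\<^bsub>H5grp\<^esub> b \<in> Hcong t" using a H5_mult by (simp add: Hcong_iff)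
  qed
qed

lemma normal_Hcong: "Hcong t \<lhd> H5grp"
  unfolding HG.normal_inv_iff
proof (intro conjI ballI subgroup_Hcong)
  fix x h assume x: "x \<in> carrier H5grp" and h: "h \<in> Hcong t"
  hence xh: "x \<in> H5" "h \<in> H5" "cg t h (mat 1)" by (auto simp: Hcong_iff)
  have "cg t (x ** h) (x ** mat 1)"
    by (rule cg_mult) (use xh H5_zl H5_one cg_refl in auto)
  hence "cg t (x ** h ** adj x) (x ** mat 1 ** adj x)"
    by (rule cg_mult) (use xh H5_zl H5_one cg_refl H5_adj H5_mult in auto)
  moreover have "x ** mat 1 ** adj x = mat 1" using adj_right H5_det xh by simp
  ultimately show "x \<otimes>\<^bsub>H5grp\<^esub> h \<otimes>\<^bsub>H5grp\<^esub> inv\<^bsub>H5grp\<^esub> x \<in> Hcong t"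
    using xh inv_H5grp H5_adj H5_mult by (simp add: Hcong_iff)
qed



lemma (in group) normal_mult_subgroup:
  assumes N1: "N1 \<lhd> G" and N2: "subgroup N2 G"
  shows "subgroup (N1 <#> N2) G"
proof (rule subgroupI)
  have s1: "subgroup N1 G" using N1 normal_imp_subgroup by blast
  note S1 = subgroup.subset[OF s1] and S2 = subgroup.subset[OF N2]
  show "N1 <#> N2 \<subseteq> carrier G" unfolding set_mult_def using S1 S2 by auto
  show "N1 <#> N2 \<noteq> {}" unfolding set_mult_def
    using subgroup.one_closed[OF s1] subgroup.one_closed[OF N2] by blast
  show "\<And>a. a \<in> N1 <#> N2 \<Longrightarrow> inv a \<in> N1 <#> N2"
  proof -
    fix a assume "a \<in> N1 <#> N2"
    then obtain h k where hk: "h \<in> N1" "k \<in> N2" "a = h \<otimes> k" unfolding set_mult_def by blast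
    have c: "h \<in> carrier G" "k \<in> carrier G" using hk S1 S2 by auto
    have "inv a = (inv k \<otimes> inv h \<otimes> inv (inv k)) \<otimes> inv k"
      using c hk by (simp add: inv_mult_group m_assoc)
    moreover have "inv k \<otimes> inv h \<otimes> inv (inv k) \<in> N1"
      using normal.inv_op_closed2[OF N1, of "inv k" "inv h"] c hk subgroup.m_inv_closed[OF s1] by simp
    moreover have "inv k \<in> N2" using hk subgroup.m_inv_closed[OF N2] by simp
    ultimately show "inv a \<in> N1 <#> N2" unfolding set_mult_def by blast
  qed
  show "\<And>a b. a \<in> N1 <#> N2 \<Longrightarrow> b \<in> N1 <#> N2 \<Longrightarrow> a \<otimes> b \<in> N1 <#> N2"
  proof -
    fix a b assume "a \<in> N1 <#> N2" "b \<in> N1 <#> N2"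
    then obtain h k h' k' where hk: "h \<in> N1" "k \<in> N2" "a = h \<otimes> k" "h' \<in> N1" "k' \<in> N2" "b = h' \<otimes> k'"
      unfolding set_mult_def by blast
    have c: "h \<in> carrier G" "k \<in> carrier G" "h' \<in> carrier G" "k' \<in> carrier G" using hk S1 S2 by auto
    have ik: "inv k \<otimes> (k \<otimes> k') = k'" using c by (simp add: m_assoc[symmetric])
    have "(h \<otimes> (k \<otimes> h' \<otimes> inv k)) \<otimes> (k \<otimes> k') = h \<otimes> (k \<otimes> (h' \<otimes> (inv k \<otimes> (k \<otimes> k'))))"
      using c by (simp add: m_assoc)
    hence "a \<otimes> b = (h \<otimes> (k \<otimes> h' \<otimes> inv k)) \<otimes> (k \<otimes> k')"
      using c hk ik by (simp add: m_assoc)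
    moreover have "h \<otimes> (k \<otimes> h' \<otimes> inv k) \<in> N1"
      using normal.inv_op_closed2[OF N1, of k h'] c hk subgroup.m_closed[OF s1] by simp
    moreover have "k \<otimes> k' \<in> N2" using hk subgroup.m_closed[OF N2] by simp
    ultimately show "a \<otimes> b \<in> N1 <#> N2" unfolding set_mult_def by blast
  qed
qed

lemma (in group) setmult_sub_id:
  assumes "subgroup N G" "subgroup K G" "K \<subseteq> N"
  shows "N <#> K = N"
proof
  show "N <#> K \<subseteq> N" unfolding set_mult_def using assms subgroup.m_closed[OF assms(1)] by auto
  show "N \<subseteq> N <#> K"
  proof
    fix x assume "x \<in> N"
    moreover have "x = x \<otimes> \<one>" using \<open>x \<in> N\<close> subgroup.subset[OF assms(1)] by auto
    ultimately show "x \<in> N <#> K" unfolding set_mult_def using subgroup.one_closed[OF assms(2)] by blast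
  qed
qed

lemma (in group) index_prod:
  assumes s1: "subgroup N1 G" and s2: "subgroup N2 G" and eq: "carrier G = N1 <#> N2"
  shows "card (rcosets (N1 \<inter> N2)) = card (rcosets N1) * card (rcosets N2)"
proof -
  define K where "K = N1 \<inter> N2"
  have sK: "subgroup K G" unfolding K_def using subgroups_Inter_pair s1 s2 by blast
  note S1 = subgroup.subset[OF s1] and S2 = subgroup.subset[OF s2] and SK = subgroup.subset[OF sK]
  define f where "f C = (N1 <#> C, N2 <#> C)" for C
  have fa: "f (K #> a) = (N1 #> a, N2 #> a)" if "a \<in> carrier G" for a
  proof -
    have "N1 <#> (K #> a) = (N1 <#> K) #> a" using setmult_rcos_assoc S1 SK that by blast
    moreover have "N1 <#> K = N1" using setmult_sub_id s1 sK K_def by blast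
    moreover have "N2 <#> (K #> a) = (N2 <#> K) #> a" using setmult_rcos_assoc S2 SK that by blast
    moreover have "N2 <#> K = N2" using setmult_sub_id s2 sK K_def by blast
    ultimately show ?thesis unfolding f_def by simp
  qed
  have mem: "C \<in> rcosets H \<longleftrightarrow> (\<exists>a\<in>carrier G. C = H #> a)" for H C
    unfolding RCOSETS_def by blast
  have inj: "inj_on f (rcosets K)"
  proof (rule inj_onI)
    fix C D assume "C \<in> rcosets K" "D \<in> rcosets K" "f C = f D"
    then obtain a b where ab: "a \<in> carrier G" "b \<in> carrier G" "C = K #> a" "D = K #> b"
      "N1 #> a = N1 #> b" "N2 #> a = N2 #> b" using mem fa by (metis prod.inject)
    have "a \<in> N1 #> b" using rcos_self[OF ab(1) s1] ab(5) by simp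
    hence 1: "a \<otimes> inv b \<in> N1" using subgroup.rcos_module_imp[OF s1 is_group ab(2)] by blast
    have "a \<in> N2 #> b" using rcos_self[OF ab(1) s2] ab(6) by simp
    hence 2: "a \<otimes> inv b \<in> N2" using subgroup.rcos_module_imp[OF s2 is_group ab(2)] by blast
    have "a \<in> K #> b" using subgroup.rcos_module_rev[OF sK is_group ab(2) ab(1)] 1 2 K_def by blast
    hence "K #> b = K #> a" using repr_independence[OF _ ab(2) sK] by blast
    thus "C = D" using ab by simp
  qed
  have img: "f ` (rcosets K) = (rcosets N1) \<times> (rcosets N2)"
  proof
    show "f ` (rcosets K) \<subseteq> (rcosets N1) \<times> (rcosets N2)" using fa mem by fastforce
    show "(rcosets N1) \<times> (rcosets N2) \<subseteq> f ` (rcosets K)"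
    proof clarify
      fix A B assume "A \<in> rcosets N1" "B \<in> rcosets N2"
      then obtain a b where ab: "a \<in> carrier G" "b \<in> carrier G" "A = N1 #> a" "B = N2 #> b"
        using mem by metis
      have "a \<otimes> inv b \<in> carrier G" using ab by simp
      hence "a \<otimes> inv b \<in> N1 <#> N2" using eq by simp
      then obtain n1 n2 where n: "n1 \<in> N1" "n2 \<in> N2" "a \<otimes> inv b = n1 \<otimes> n2"
        unfolding set_mult_def by blast
      have nc: "n1 \<in> carrier G" "n2 \<in> carrier G" using n S1 S2 by auto
      define c where "c = inv n1 \<otimes> a"
      have cc: "c \<in> carrier G" using c_def nc ab by simp
      have "c \<otimes> inv a = inv n1" unfolding c_def using nc ab by (simp add: m_assoc)
      hence "c \<otimes> inv a \<in> N1" using n subgroup.m_inv_closed[OF s1] by simp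
      hence "c \<in> N1 #> a" using subgroup.rcos_module_rev[OF s1 is_group ab(1) cc] by blast
      hence A: "N1 #> a = N1 #> c" using repr_independence[OF _ ab(1) s1] by blast
      have "c \<otimes> inv b = inv n1 \<otimes> (a \<otimes> inv b)" unfolding c_def using nc ab by (simp add: m_assoc)
      also have "\<dots> = n2" using n nc by (simp add: m_assoc[symmetric])
      finally have "c \<otimes> inv b \<in> N2" using n by simp
      hence "c \<in> N2 #> b" using subgroup.rcos_module_rev[OF s2 is_group ab(2) cc] by blast
      hence B: "N2 #> b = N2 #> c" using repr_independence[OF _ ab(2) s2] by blast
      have "(A, B) = f (K #> c)" using fa[OF cc] A B ab by simp
      moreover have "K #> c \<in> rcosets K" using mem cc by blast
      ultimately show "(A, B) \<in> f ` (rcosets K)" by blast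
    qed
  qed
  have "card (rcosets K) = card (f ` (rcosets K))" using card_image[OF inj] by simp
  also have "\<dots> = card (rcosets N1) * card (rcosets N2)" using img card_cartesian_product by simp
  finally show ?thesis unfolding K_def .
qed



lemma min_pos: assumes "t \<in> Zlam" "t \<noteq> 0"
  shows "0 < min_pos_int t \<and> real (min_pos_int t) \<in> ideal_gen t"
  unfolding min_pos_int_def by (rule LeastI_ex, rule exists_pos_int[OF assms])

lemma bez: assumes "coprime (a::nat) b" shows "\<exists>u v::int. u * int a + v * int b = 1"
proof -
  have "gcd (int a) (int b) = 1" using assms by (simp add: coprime_iff_gcd_eq_1)
  thus ?thesis using bezout_int[of "int a" "int b"] by simp
qed

lemma ideal_prod_iff:
  assumes t: "t \<in> Zlam" and p: "p \<in> Zlam" and a: "A \<in> ideal_gen t" and b: "B \<in> ideal_gen p"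
    and uv: "u * A + v * B = 1" and u: "u \<in> Zlam" and v: "v \<in> Zlam"
  shows "x \<in> ideal_gen (t * p) \<longleftrightarrow> x \<in> ideal_gen t \<and> x \<in> ideal_gen p"
proof
  assume "x \<in> ideal_gen (t * p)"
  then obtain y where y: "y \<in> Zlam" "x = t * p * y" unfolding ideal_iff by blast
  have "x = t * (p * y)" "x = p * (t * y)" using y by (simp_all add: algebra_simps)
  thus "x \<in> ideal_gen t \<and> x \<in> ideal_gen p" using y t p ideal_gen_self Zlam_mult by metis
next
  assume "x \<in> ideal_gen t \<and> x \<in> ideal_gen p"
  then obtain y z where yz: "y \<in> Zlam" "x = t * y" "z \<in> Zlam" "x = p * z" unfolding ideal_iff by blast
  obtain a' where a': "a' \<in> Zlam" "A = t * a'" using a unfolding ideal_iff by blast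
  obtain b' where b': "b' \<in> Zlam" "B = p * b'" using b unfolding ideal_iff by blast
  have "x = x * (u * A + v * B)" using uv by simp
  also have "\<dots> = (t * p) * (u * z * a' + v * y * b')"
    using yz a' b' by (simp add: algebra_simps)
  finally show "x \<in> ideal_gen (t * p)"
    using ideal_gen_self yz a' b' u v Zlam_mult Zlam_add by metis
qed

definition Tn :: "int \<Rightarrow> real^2^2" where "Tn n = mat2 1 (of_int n * lam) 0 1"
definition Ln :: "int \<Rightarrow> real^2^2" where "Ln n = mat2 1 0 (of_int n * lam) 1"

lemma Tn_add: "Tn p ** Tn q = Tn (p + q)" by (simp add: Tn_def mult_mat2 algebra_simps)
lemma Ln_add: "Ln p ** Ln q = Ln (p + q)" by (simp add: Ln_def mult_mat2 algebra_simps)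

lemma Tn_H5: "Tn n \<in> H5"
proof (induction n rule: int_induct[where k = 0])
  case base then show ?case using H5_one by (simp add: Tn_def mat1_mat2)
next
  case (step1 i)
  have "Tn (i+1) = Tn i ** Tm" by (simp add: Tn_def Tm_def mult_mat2 algebra_simps)
  then show ?case using step1 H5_T H5_mult by simp
next
  case (step2 i)
  have "Tn (i-1) = Tn i ** adj Tm" by (simp add: Tn_def Tm_def adj_mat2 mult_mat2 algebra_simps)
  then show ?case using step2 H5_T H5_mult H5_adj by simp
qed

lemma Ln_H5: "Ln n \<in> H5"
proof -
  have "Ln n = Sm ** Tn (-n) ** adj Sm" by (simp add: Ln_def Tn_def Sm_def adj_mat2 mult_mat2)
  thus ?thesis using Tn_H5 H5_S H5_adj H5_mult by simp
qed

lemma Tn_Hcong: "of_int n * lam \<in> ideal_gen t \<Longrightarrow> Tn n \<in> Hcong t"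
  using Tn_H5 by (simp add: Hcong_iff cg_def Tn_def mat1_mat2)
lemma Ln_Hcong: "of_int n * lam \<in> ideal_gen t \<Longrightarrow> Ln n \<in> Hcong t"
  using Ln_H5 by (simp add: Hcong_iff cg_def Ln_def mat1_mat2)

lemma S_word: "Ln 1 ** Tn (-1) ** Ln 1 ** Tn (-1) ** Ln 1 = Sm"
proof -
  have 1: "Ln 1 ** Tn (-1) = mat2 1 (-lam) lam (-lam)"
    by (simp add: Ln_def Tn_def mult_mat2 lam_sq)
  have 2: "mat2 1 (-lam) lam (-lam) ** mat2 1 (-lam) lam (-lam) = mat2 (-lam) 1 (-1) 0"
    by (simp add: mult_mat2 lam_sq)
  have 3: "mat2 (-lam) 1 (-1) 0 ** Ln 1 = Sm"
    by (simp add: Ln_def Sm_def mult_mat2)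
  have "Ln 1 ** Tn (-1) ** Ln 1 ** Tn (-1) ** Ln 1 = (Ln 1 ** Tn (-1)) ** (Ln 1 ** Tn (-1)) ** Ln 1"
    by (simp add: matrix_mul_assoc)
  thus ?thesis using 1 2 3 by simp
qed

lemma Hcong_prod:
  assumes "t \<in> Zlam" "p \<in> Zlam" "real a \<in> ideal_gen t" "real b \<in> ideal_gen p"
    "u * int a + v * int b = 1"
  shows "Hcong (t * p) = Hcong t \<inter> Hcong p"
proof -
  have uv: "of_int u * real a + of_int v * real b = 1"
    using arg_cong[OF assms(5), of "of_int :: int \<Rightarrow> real"] by simp
  have iff: "x \<in> ideal_gen (t * p) \<longleftrightarrow> x \<in> ideal_gen t \<and> x \<in> ideal_gen p" for x
    by (rule ideal_prod_iff[OF assms(1-4) uv]) simp_all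
  show ?thesis unfolding set_eq_iff Int_iff Hcong_iff cg_def iff by auto
qed



lemma H5_gen: "H5 = generate H5grp {Sm, Tm}"
proof -
  have "generate (SL2\<lparr>carrier := H5\<rparr>) {Sm, Tm} = generate SL2 {Sm, Tm}"
    by (rule SL.generate_consistent[OF _ subgroup_H5]) (use H5_S H5_T in blast)
  thus ?thesis unfolding H5grp_def H5_def[symmetric] by simp
qed

theorem lemma4p1:
  fixes \<tau> \<pi> :: real
  assumes "\<tau> \<in> Zlam" and "\<pi> \<in> Zlam" and "\<tau> \<noteq> 0" and "\<pi> \<noteq> 0"
    and "coprime (min_pos_int \<tau>) (min_pos_int \<pi>)"
  shows "H5 = Hcong \<tau> <#>\<^bsub>H5grp\<^esub> Hcong \<pi> \<and>
         idx5 (Hcong (\<tau> * \<pi>)) = idx5 (Hcong \<tau>) * idx5 (Hcong \<pi>)"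
proof -
  define a where "a = min_pos_int \<tau>"
  define b where "b = min_pos_int \<pi>"
  have a: "real a \<in> ideal_gen \<tau>" using min_pos[OF assms(1,3)] a_def by simp
  have b: "real b \<in> ideal_gen \<pi>" using min_pos[OF assms(2,4)] b_def by simp
  obtain u v :: int where uv: "u * int a + v * int b = 1" using bez assms(5) a_def b_def by blast
  define N where "N = Hcong \<tau> <#>\<^bsub>H5grp\<^esub> Hcong \<pi>"
  have sN: "subgroup N H5grp" unfolding N_def
    by (rule group.normal_mult_subgroup[OF group_H5grp normal_Hcong subgroup_Hcong])
  have inN: "x \<in> Hcong \<tau> \<Longrightarrow> y \<in> Hcong \<pi> \<Longrightarrow> x ** y \<in> N" for x y
    unfolding N_def set_mult_def by auto
  have TaI: "of_int (k * int a) * lam \<in> ideal_gen \<tau>" for k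
  proof -
    have e: "of_int (k * int a) * lam = (of_int k * lam) * real a" by simp
    show ?thesis unfolding e by (rule ideal_multL[OF a]) simp
  qed
  have TbI: "of_int (k * int b) * lam \<in> ideal_gen \<pi>" for k
  proof -
    have e: "of_int (k * int b) * lam = (of_int k * lam) * real b" by simp
    show ?thesis unfolding e by (rule ideal_multL[OF b]) simp
  qed
  have split: "n = n * u * int a + n * v * int b" for n
  proof -
    have "n * (u * int a + v * int b) = n" using uv by simp
    thus ?thesis by (simp add: distrib_left mult.assoc)
  qed
  have TN: "Tn n \<in> N" for n
  proof -
    have "Tn n = Tn (n * u * int a + n * v * int b)" by (rule arg_cong[OF split])
    also have "\<dots> = Tn (n * u * int a) ** Tn (n * v * int b)" by (rule Tn_add[symmetric])
    finally show ?thesis using inN[OF Tn_Hcong[OF TaI] Tn_Hcong[OF TbI]] by simp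
  qed
  have LN: "Ln n \<in> N" for n
  proof -
    have "Ln n = Ln (n * u * int a + n * v * int b)" by (rule arg_cong[OF split])
    also have "\<dots> = Ln (n * u * int a) ** Ln (n * v * int b)" by (rule Ln_add[symmetric])
    finally show ?thesis using inN[OF Ln_Hcong[OF TaI] Ln_Hcong[OF TbI]] by simp
  qed
  have SN: "Sm \<in> N"
  proof -
    have m: "x \<in> N \<Longrightarrow> y \<in> N \<Longrightarrow> x ** y \<in> N" for x y
      using subgroup.m_closed[OF sN] by fastforce
    have "Ln 1 ** Tn (-1) ** Ln 1 ** Tn (-1) ** Ln 1 \<in> N" by (intro m TN LN)
    thus ?thesis using S_word by simp
  qed
  have TmN: "Tm \<in> N" using TN[of 1] by (simp add: Tn_def Tm_def)
  have "H5 = generate H5grp {Sm, Tm}" by (rule H5_gen)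
  also have "\<dots> \<subseteq> N" by (rule group.generate_subgroup_incl[OF group_H5grp _ sN]) (use SN TmN in simp)
  finally have "H5 \<subseteq> N" .
  moreover have "N \<subseteq> H5" using subgroup.subset[OF sN] by simp
  ultimately have eq: "H5 = N" by blast
  have "idx5 (Hcong (\<tau> * \<pi>)) = card (rcosets\<^bsub>H5grp\<^esub> (Hcong \<tau> \<inter> Hcong \<pi>))"
    unfolding idx5_def using Hcong_prod[OF assms(1,2) a b uv] by simp
  also have "\<dots> = idx5 (Hcong \<tau>) * idx5 (Hcong \<pi>)"
    unfolding idx5_def
    by (rule group.index_prod[OF group_H5grp subgroup_Hcong subgroup_Hcong]) (use eq N_def in simp)
  finally show ?thesis using eq N_def by simp
qed

end
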